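(* Let $E \subseteq \mathbb{R}$. If $\dim_{\mathrm{CM}}(E) > 0$, then there exist $n \in \mathbb{N}$ and a linear map $T : \mathbb{R}^n \to \mathbb{R}$ such that $T(E^n)$ is dense in $\mathbb{R}$. In particular, if there is a real $s > 0$ such that $\mathscr{N}((-r,r) \cap E) \geq r^s$ for all sufficiently large $r \in \mathbb{R}$, then there exist $n \in \mathbb{N}$ and a linear $T : \mathbb{R}^n \to \mathbb{R}$ such that $T(E^n)$ is dense.
   Context: For a bounded $X \subseteq \mathbb{R}^n$, $\mathscr{M}(1,X)$ denotes the minimum number of open balls of radius $1$ needed to cover $X$. Let $B_n(r)$ be the open ball in $\mathbb{R}^n$ of radius $r$ centered at $0$. The coarse Minkowski dimension of $Z \subseteq \mathbb{R}^n$ is $\dim_{\mathrm{CM}}(Z) := \limsup_{r \to \infty} \frac{\log \mathscr{M}(1, B_n(r) \cap Z)}{\log r}$. For bounded $X \subseteq \mathbb{R}$, $\mathscr{N}(X)$ is the number of integers $k$ such that $[k,k+1] \cap X \neq \emptyset$. $E^n$ denotes the $n$-fold Cartesian power of $E$. *)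

theory Defs
  imports "HOL-Analysis.Analysis"
begin

definition cover_num :: "'a::metric_space set \<Rightarrow> nat" where
  "cover_num X = (LEAST m. \<exists>C. finite C \<and> card C = m \<and> X \<subseteq> (\<Union>c\<in>C. ball c 1))"

definition dim_CM :: "real set \<Rightarrow> ereal" where
  "dim_CM Z = Limsup at_top (\<lambda>r::real. ereal (ln (real (cover_num (ball 0 r \<inter> Z))) / ln r))"

definition N_count :: "real set \<Rightarrow> nat" where
  "N_count X = card {k::int. {real_of_int k..real_of_int k + 1} \<inter> X \<noteq> {}}"

text \<open>Image of E^n under the linear map R^n \<rightarrow> R, x \<mapsto> \<Sum>i<n. a i * x i
  (every linear map R^n \<rightarrow> R has this form); points of R^n are functions on {0..<n}.\<close>
definition lin_image :: "nat \<Rightarrow> (nat \<Rightarrow> real) \<Rightarrow> real set \<Rightarrow> real set" where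
  "lin_image n a E = {(\<Sum>i<n. a i * x i) | x. \<forall>i<n. x i \<in> E}"

end

theory Submission
  imports Defs
begin


definition Kset :: "real \<Rightarrow> real set \<Rightarrow> int set" where
  "Kset r E = {k::int. {real_of_int k..real_of_int k + 1} \<inter> ({-r<..<r} \<inter> E) \<noteq> {}}"

lemma Kset_finite: "finite (Kset r E)"
proof -
  have "Kset r E \<subseteq> {\<lfloor>-r\<rfloor> - 1 .. \<lceil>r\<rceil>}"
  proof
    fix k assume "k \<in> Kset r E"
    then obtain x where x: "real_of_int k \<le> x" "x \<le> real_of_int k + 1" "-r < x" "x < r"
      unfolding Kset_def by auto
    have "real_of_int k < real_of_int \<lceil>r\<rceil> + 1" using x le_of_int_ceiling[of r] by linarith
    moreover have "real_of_int (\<lfloor>-r\<rfloor> - 1) < real_of_int k + 1" using x of_int_floor_le[of "-r"] by linarith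
    ultimately show "k \<in> {\<lfloor>-r\<rfloor> - 1 .. \<lceil>r\<rceil>}" by simp
  qed
  then show ?thesis using finite_subset by blast
qed

lemma N_count_Kset: "N_count ({-r<..<r} \<inter> E) = card (Kset r E)"
  unfolding N_count_def Kset_def by simp

lemma cover_le: "cover_num (ball 0 r \<inter> E) \<le> card (Kset r E)"
proof -
  let ?C = "(\<lambda>k. real_of_int k + 1/2) ` Kset r E"
  have fin: "finite ?C" using Kset_finite by simp
  have cov: "ball 0 r \<inter> E \<subseteq> (\<Union>c\<in>?C. ball c 1)"
  proof
    fix x assume x: "x \<in> ball 0 r \<inter> E"
    let ?k = "\<lfloor>x\<rfloor>"
    have "x \<in> {real_of_int ?k..real_of_int ?k + 1} \<inter> ({-r<..<r} \<inter> E)"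
      using x by (auto simp: dist_real_def)
    then have "?k \<in> Kset r E" unfolding Kset_def by blast
    moreover have "x \<in> ball (real_of_int ?k + 1/2) 1"
      by (simp add: dist_real_def) linarith
    ultimately show "x \<in> (\<Union>c\<in>?C. ball c 1)" by blast
  qed
  have "cover_num (ball 0 r \<inter> E) \<le> card ?C"
    unfolding cover_num_def by (rule Least_le) (use fin cov in blast)
  also have "\<dots> \<le> card (Kset r E)" by (rule card_image_le[OF Kset_finite])
  finally show ?thesis .
qed

definition Hyp :: "real set \<Rightarrow> real \<Rightarrow> bool" where
  "Hyp E s \<longleftrightarrow> s > 0 \<and> (\<forall>R. \<exists>r\<ge>R. real (card (Kset r E)) \<ge> r powr s)"

lemma part2:
  assumes "s > 0" "\<forall>\<^sub>F r in at_top. real (N_count ({-r<..<r} \<inter> E)) \<ge> r powr s"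
  shows "Hyp E s"
proof -
  obtain N where N: "\<And>r. r \<ge> N \<Longrightarrow> real (N_count ({-r<..<r} \<inter> E)) \<ge> r powr s"
    using assms(2) unfolding eventually_at_top_linorder by blast
  show ?thesis unfolding Hyp_def
  proof (intro conjI allI)
    fix R show "\<exists>r\<ge>R. real (card (Kset r E)) \<ge> r powr s"
      using N[of "max R N"] by (intro exI[of _ "max R N"]) (auto simp: N_count_Kset)
  qed (use assms in auto)
qed

lemma part1:
  assumes "dim_CM E > 0"
  shows "\<exists>s. Hyp E s"
proof -
  let ?f = "\<lambda>r::real. ereal (ln (real (cover_num (ball 0 r \<inter> E))) / ln r)"
  obtain z where z: "0 < ereal z" "ereal z < Limsup at_top ?f"
    using ereal_dense2[OF assms[unfolded dim_CM_def]] by blast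
  have zpos: "z > 0" using z by simp
  have freq: "\<exists>r\<ge>R. ?f r > ereal z" for R
  proof (rule ccontr)
    assume "\<not> ?thesis"
    then have "eventually (\<lambda>r. ?f r \<le> ereal z) at_top"
      unfolding eventually_at_top_linorder by (auto intro!: exI[of _ R] simp: not_less)
    then have "Limsup at_top ?f \<le> ereal z" by (rule Limsup_bounded)
    with z show False by simp
  qed
  have "Hyp E z" unfolding Hyp_def
  proof (intro conjI allI)
    fix R
    obtain r where r: "r \<ge> max R 2" "?f r > ereal z" using freq by blast
    have lnr: "ln r > 0" using r by simp
    define c where "c = cover_num (ball 0 r \<inter> E)"
    have "ln (real c) / ln r > z" using r(2) unfolding c_def by simp
    then have "ln (real c) > z * ln r" using lnr by (simp add: field_simps)
    then have cpos: "c > 0" using zpos lnr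
      by (metis of_nat_0 ln_0 mult_pos_pos not_gr0 order_less_asym)
    have "r powr z = exp (z * ln r)" using r by (simp add: powr_def)
    also have "\<dots> < exp (ln (real c))" using \<open>ln (real c) > z * ln r\<close> by simp
    also have "\<dots> = real c" using cpos by simp
    also have "\<dots> \<le> real (card (Kset r E))" unfolding c_def using cover_le by simp
    finally show "\<exists>r\<ge>R. real (card (Kset r E)) \<ge> r powr z" using r by (intro exI[of _ r]) auto
  qed (use zpos in auto)
  then show ?thesis by blast
qed



lemma residue_class:
  fixes K :: "int set" and M :: nat
  assumes "finite K" "M > 0"
  shows "\<exists>c. real (card K) \<le> real M * real (card {k\<in>K. k mod int M = c})"
proof (rule ccontr)
  assume "\<not> ?thesis"
  then have lt0: "real M * real (card {k\<in>K. k mod int M = c}) < real (card K)" for c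
    by (meson not_le)
  have lt: "real (card {k\<in>K. k mod int M = c}) < real (card K) / real M" for c
    using lt0[of c] assms(2) by (simp add: pos_less_divide_eq mult.commute)
  have KU: "K = (\<Union>c\<in>{0..<int M}. {k\<in>K. k mod int M = c})"
    using assms(2) by auto
  have "card K = card (\<Union>c\<in>{0..<int M}. {k\<in>K. k mod int M = c})"
    using KU by (rule arg_cong)
  also have "\<dots> \<le> (\<Sum>c\<in>{0..<int M}. card {k\<in>K. k mod int M = c})"
    by (rule card_UN_le) simp
  finally have "card K \<le> (\<Sum>c\<in>{0..<int M}. card {k\<in>K. k mod int M = c})" .
  then have "real (card K) \<le> real (\<Sum>c\<in>{0..<int M}. card {k\<in>K. k mod int M = c})"
    by (simp only: of_nat_le_iff)
  also have "\<dots> = (\<Sum>c\<in>{0..<int M}. real (card {k\<in>K. k mod int M = c}))" by (rule of_nat_sum)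
  also have "\<dots> < (\<Sum>c\<in>{0..<int M}. real (card K) / real M)"
    by (rule sum_strict_mono) (use assms(2) lt in auto)
  also have "\<dots> = real (card K)" using assms(2) by simp
  finally show False by simp
qed

lemma same_class_far:
  fixes k k' :: int and M :: nat
  assumes "k mod int M = k' mod int M" "k \<noteq> k'"
  shows "real M \<le> \<bar>real_of_int k - real_of_int k'\<bar>"
proof -
  have "int M dvd (k - k')" using assms(1) by (simp add: mod_eq_dvd_iff)
  then have "\<bar>int M\<bar> \<le> \<bar>k - k'\<bar>" using assms(2) by (intro dvd_imp_le_int) auto
  then have "int M \<le> \<bar>k - k'\<bar>" by simp
  then show ?thesis by (metis of_int_abs of_int_diff of_int_le_iff of_int_of_nat_eq)
qed

lemma eventually_powr_big:
  fixes p Q :: real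
  assumes "p > 0"
  shows "\<exists>R0\<ge>1. \<forall>r\<ge>R0. r powr p > Q"
proof -
  define R0 where "R0 = max 1 ((max Q 1 + 1) powr (1/p))"
  have "\<forall>r\<ge>R0. r powr p > Q"
  proof (intro allI impI)
    fix r assume r: "r \<ge> R0"
    have "(max Q 1 + 1) = ((max Q 1 + 1) powr (1/p)) powr p"
      using assms by (simp add: powr_powr)
    also have "\<dots> \<le> r powr p"
      using r assms unfolding R0_def by (intro powr_mono2) auto
    finally show "r powr p > Q" by linarith
  qed
  then show ?thesis unfolding R0_def by (intro exI[of _ R0]) (auto simp: R0_def)
qed

lemma floor_eq_close:
  fixes u v :: real
  assumes "\<lfloor>u\<rfloor> = \<lfloor>v\<rfloor>"
  shows "\<bar>u - v\<bar> < 1"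
  using assms by linarith



lemma PH:
  assumes H: "Hyp E s" and sm: "s * real m > 1" and L: "L \<ge> 0" and eta: "\<eta> > 0"
    and A: "\<forall>i<m. \<bar>c i\<bar> \<le> A"
  shows "\<exists>x y. (\<forall>i<m. x i \<in> E \<and> y i \<in> E) \<and> (\<exists>j<m. \<bar>x j - y j\<bar> \<ge> L)
           \<and> \<bar>\<Sum>i<m. c i * (x i - y i)\<bar> < \<eta>"
proof -
  have spos: "s > 0" using H unfolding Hyp_def by simp
  have mpos: "m > 0" using sm by (cases m) auto
  have A0: "A \<ge> 0" using A mpos by (meson abs_ge_zero order_trans)
  define M :: nat where "M = nat \<lceil>L\<rceil> + 1"
  have hML: "real M \<ge> L + 1" unfolding M_def using L by linarith
  have Mpos: "M > 0" unfolding M_def by simp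
  define p where "p = s * real m - 1"
  have ppos: "p > 0" using sm unfolding p_def by simp
  define Q where "Q = real M ^ m * (2 * real m * A / \<eta> + 3)"
  obtain R0 where R0: "R0 \<ge> 1" "\<And>r. r \<ge> R0 \<Longrightarrow> r powr p > Q"
    using eventually_powr_big[OF ppos, of Q] by blast
  obtain r where r: "r \<ge> R0" "real (card (Kset r E)) \<ge> r powr s"
    using H unfolding Hyp_def by blast
  have r1: "r \<ge> 1" using r R0 by simp
  define K where "K = Kset r E"
  have finK: "finite K" unfolding K_def by (rule Kset_finite)
  obtain c0 where c0: "real (card K) \<le> real M * real (card {k\<in>K. k mod int M = c0})"
    using residue_class[OF finK Mpos] by blast
  define F where "F = {k\<in>K. k mod int M = c0}"
  have FK: "F \<subseteq> K" unfolding F_def by auto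
  have finF: "finite F" using finK FK finite_subset by blast
  have Ffar: "\<And>k k'. k \<in> F \<Longrightarrow> k' \<in> F \<Longrightarrow> k \<noteq> k' \<Longrightarrow> real M \<le> \<bar>real_of_int k - real_of_int k'\<bar>"
    unfolding F_def by (intro same_class_far) auto
  have "\<forall>k\<in>K. \<exists>x. x \<in> E \<and> real_of_int k \<le> x \<and> x \<le> real_of_int k + 1 \<and> -r < x \<and> x < r"
    unfolding K_def Kset_def by auto
  from bchoice[OF this] obtain pt where pt0: "\<forall>k\<in>K. pt k \<in> E \<and> real_of_int k \<le> pt k \<and> pt k \<le> real_of_int k + 1 \<and> -r < pt k \<and> pt k < r"
    by blast
  have pt: "\<And>k. k \<in> K \<Longrightarrow> pt k \<in> E \<and> real_of_int k \<le> pt k \<and> pt k \<le> real_of_int k + 1 \<and> -r < pt k \<and> pt k < r"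
    using pt0 by blast
  define Dom where "Dom = PiE {..<m} (\<lambda>_. F)"
  have cardDom: "card Dom = card F ^ m" unfolding Dom_def by (simp add: card_PiE)
  have cardF: "real (card F) \<ge> r powr s / real M"
    using c0 r(2) Mpos unfolding F_def K_def by (simp add: divide_le_eq mult.commute)
  have "(r powr s / real M) ^ m = (r powr s) ^ m / real M ^ m" by (simp add: power_divide)
  also have "(r powr s) ^ m = r powr (s * real m)"
    using r1 by (simp add: powr_realpow[symmetric] powr_powr)
  also have "r powr (s * real m) = r * r powr p"
  proof -
    have "r powr (s * real m) = r powr (1 + p)" unfolding p_def by simp
    also have "\<dots> = r * r powr p" using r1 by (simp add: powr_add)
    finally show ?thesis .
  qed
  finally have eq1: "(r powr s / real M) ^ m = r * r powr p / real M ^ m" .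
  have "r * Q < r * r powr p" using R0(2)[OF r(1)] r1 by simp
  then have "r * (2 * real m * A / \<eta> + 3) < r * r powr p / real M ^ m"
    unfolding Q_def using Mpos by (simp add: field_simps)
  also have "\<dots> \<le> real (card F) ^ m" unfolding eq1[symmetric]
    by (rule power_mono[OF cardF]) (use Mpos r1 in simp)
  finally have big0: "r * (2 * real m * A / \<eta> + 3) < real (card F) ^ m" .
  have big: "2 * real m * A * r / \<eta> + 3 < real (card Dom)"
  proof -
    have "r * (2 * real m * A / \<eta> + 3) = 2 * real m * A * r / \<eta> + 3 * r"
      by (simp add: distrib_left)
    then show ?thesis using big0 r1
      unfolding cardDom by simp
  qed
  define f where "f = (\<lambda>\<kappa>. \<Sum>i<m. c i * pt (\<kappa> i))"
  define g where "g = (\<lambda>\<kappa>. \<lfloor>f \<kappa> / \<eta>\<rfloor>)"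
  define B where "B = \<lceil>real m * A * r / \<eta>\<rceil>"
  have fbound: "\<bar>f \<kappa>\<bar> \<le> real m * A * r" if "\<kappa> \<in> Dom" for \<kappa>
  proof -
    have "\<bar>f \<kappa>\<bar> \<le> (\<Sum>i<m. \<bar>c i * pt (\<kappa> i)\<bar>)" unfolding f_def by (rule sum_abs)
    also have "\<dots> \<le> (\<Sum>i<m. A * r)"
    proof (rule sum_mono)
      fix i assume i: "i \<in> {..<m}"
      then have "\<kappa> i \<in> K" using that FK unfolding Dom_def by (auto simp: PiE_iff)
      then have "\<bar>pt (\<kappa> i)\<bar> \<le> r" using pt by fastforce
      moreover have "\<bar>c i\<bar> \<le> A" using A i by simp
      ultimately show "\<bar>c i * pt (\<kappa> i)\<bar> \<le> A * r"
        by (simp add: abs_mult mult_mono' A0)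
    qed
    finally show ?thesis by simp
  qed
  define b where "b = real m * A * r / \<eta>"
  have b0: "b \<ge> 0" unfolding b_def using A0 r1 eta by simp
  have gin: "g ` Dom \<subseteq> {-B..B}"
  proof
    fix z assume "z \<in> g ` Dom"
    then obtain \<kappa> where k: "\<kappa> \<in> Dom" "z = g \<kappa>" by blast
    define u where "u = f \<kappa> / \<eta>"
    have "\<bar>u\<bar> = \<bar>f \<kappa>\<bar> / \<eta>" unfolding u_def using eta by simp
    also have "\<dots> \<le> b" unfolding b_def by (rule divide_right_mono[OF fbound[OF k(1)]]) (use eta in simp)
    finally have ub: "\<bar>u\<bar> \<le> b" .
    have z: "z = \<lfloor>u\<rfloor>" unfolding k g_def u_def by simp
    have B: "B = \<lceil>b\<rceil>" unfolding B_def b_def by simp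
    have "real_of_int \<lfloor>u\<rfloor> \<le> real_of_int \<lceil>b\<rceil>"
      using of_int_floor_le[of u] le_of_int_ceiling[of b] ub by linarith
    then have 1: "\<lfloor>u\<rfloor> \<le> \<lceil>b\<rceil>" by (simp only: of_int_le_iff)
    have "real_of_int (- \<lceil>b\<rceil>) < real_of_int \<lfloor>u\<rfloor> + 1"
      using real_of_int_floor_add_one_gt[of u] le_of_int_ceiling[of b] ub by simp linarith
    then have "- \<lceil>b\<rceil> < \<lfloor>u\<rfloor> + 1"
      by (metis of_int_1 of_int_add of_int_less_iff)
    then show "z \<in> {-B..B}" using 1 unfolding z B by simp
  qed
  have "\<not> inj_on g Dom"
  proof
    assume "inj_on g Dom"
    then have "card Dom \<le> card {-B..B}" using gin by (intro card_inj_on_le) auto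
    then have "real (card Dom) \<le> real (nat (2 * B + 1))" by simp
    moreover have "real (nat (2 * B + 1)) \<le> 2 * real m * A * r / \<eta> + 3"
    proof -
      have B: "B = \<lceil>b\<rceil>" unfolding B_def b_def by simp
      have "B \<ge> 0" unfolding B using b0 by simp
      then have "real (nat (2 * B + 1)) = 2 * real_of_int B + 1" by simp
      moreover have "real_of_int B \<le> b + 1" unfolding B by (rule of_int_ceiling_le_add_one)
      moreover have "2 * b = 2 * real m * A * r / \<eta>" unfolding b_def by simp
      ultimately show ?thesis by linarith
    qed
    ultimately show False using big by linarith
  qed
  then obtain \<kappa> \<kappa>' where kk: "\<kappa> \<in> Dom" "\<kappa>' \<in> Dom" "\<kappa> \<noteq> \<kappa>'" "g \<kappa> = g \<kappa>'"
    unfolding inj_on_def by blast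
  obtain j where j: "j < m" "\<kappa> j \<noteq> \<kappa>' j"
    using kk(1-3) PiE_ext[of \<kappa> "{..<m}" "\<lambda>_. F" \<kappa>'] unfolding Dom_def by auto
  have kin: "\<kappa> i \<in> F" "\<kappa>' i \<in> F" if "i < m" for i
    using kk(1,2) that unfolding Dom_def by (auto simp: PiE_iff)
  define x where "x = (\<lambda>i. pt (\<kappa> i))"
  define y where "y = (\<lambda>i. pt (\<kappa>' i))"
  have xyE: "\<forall>i<m. x i \<in> E \<and> y i \<in> E" unfolding x_def y_def using kin pt FK by blast
  have "real M \<le> \<bar>real_of_int (\<kappa> j) - real_of_int (\<kappa>' j)\<bar>" using Ffar kin j by blast
  moreover have "pt (\<kappa> j) \<ge> real_of_int (\<kappa> j)" "pt (\<kappa> j) \<le> real_of_int (\<kappa> j) + 1"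
      "pt (\<kappa>' j) \<ge> real_of_int (\<kappa>' j)" "pt (\<kappa>' j) \<le> real_of_int (\<kappa>' j) + 1"
    using pt kin[OF j(1)] FK by blast+
  ultimately have far: "\<bar>x j - y j\<bar> \<ge> L" unfolding x_def y_def using hML by linarith
  have "\<bar>f \<kappa> / \<eta> - f \<kappa>' / \<eta>\<bar> < 1" using kk(4) unfolding g_def by (rule floor_eq_close)
  moreover have "f \<kappa> / \<eta> - f \<kappa>' / \<eta> = (f \<kappa> - f \<kappa>') / \<eta>"
    by (simp add: diff_divide_distrib)
  ultimately have "\<bar>(f \<kappa> - f \<kappa>') / \<eta>\<bar> < 1" by (simp only:)
  then have "\<bar>f \<kappa> - f \<kappa>'\<bar> / \<eta> < 1" by (simp only: abs_div_pos[OF eta])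
  then have "\<bar>f \<kappa> - f \<kappa>'\<bar> < \<eta>" using eta by (simp add: pos_divide_less_eq)
  moreover have "f \<kappa> - f \<kappa>' = (\<Sum>i<m. c i * (x i - y i))"
    unfolding f_def x_def y_def by (simp add: sum_subtractf right_diff_distrib)
  ultimately show ?thesis using xyE far j by (intro exI[of _ x] exI[of _ y]) auto
qed



lemma sum_split_add:
  fixes h :: "nat \<Rightarrow> real"
  shows "(\<Sum>i<m+k. h i) = (\<Sum>i<m. h i) + (\<Sum>i<k. h (i+m))"
  by (induction k) (simp_all add: add.commute)

lemma dens:
  fixes a0 :: "nat \<Rightarrow> real"
  assumes H: "Hyp E s" and sm: "s * real m > 1" and e: "e > 0"
  shows "\<exists>a. dist a a0 < e \<and> (\<exists>w. (\<forall>i<2*m. w i \<in> E) \<and> (\<Sum>i<m. a i * (w i - w (i+m))) = t)"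
proof -
  define A where "A = (\<Sum>i<m. \<bar>a0 i\<bar>)"
  have A: "\<forall>i<m. \<bar>a0 i\<bar> \<le> A" unfolding A_def
    by (auto intro!: member_le_sum)
  define L where "L = 4 * (\<bar>t\<bar> + 1) / e"
  have Lpos: "L > 0" unfolding L_def using e by simp
  obtain x y where xy: "\<forall>i<m. x i \<in> E \<and> y i \<in> E" and "\<exists>j<m. \<bar>x j - y j\<bar> \<ge> L"
    and S1: "\<bar>\<Sum>i<m. a0 i * (x i - y i)\<bar> < 1"
    using PH[OF H sm _ _ A, of L 1] Lpos by auto
  then obtain j where j: "j < m" "\<bar>x j - y j\<bar> \<ge> L" by blast
  define d where "d = (\<lambda>i. x i - y i)"
  define S where "S = (\<Sum>i<m. a0 i * d i)"
  have S1': "\<bar>S\<bar> < 1" using S1 unfolding S_def d_def by simp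
  have dj: "\<bar>d j\<bar> \<ge> L" using j unfolding d_def by simp
  have dj0: "d j \<noteq> 0" using dj Lpos by auto
  define \<delta> where "\<delta> = (t - S) / d j"
  define a where "a = a0(j := a0 j + \<delta>)"
  have ad: "a i * d i = a0 i * d i + (if i = j then \<delta> * d j else 0)" for i
    unfolding a_def by (simp add: distrib_right)
  have "(\<Sum>i<m. a i * d i) = S + (\<Sum>i<m. (if i = j then \<delta> * d j else 0))"
    unfolding ad S_def by (simp add: sum.distrib)
  also have "\<dots> = S + \<delta> * d j" using j by simp
  also have "\<delta> * d j = t - S" unfolding \<delta>_def using dj0 by simp
  finally have sum_eq: "(\<Sum>i<m. a i * d i) = t" by simp
  have "\<bar>\<delta>\<bar> = \<bar>t - S\<bar> / \<bar>d j\<bar>" unfolding \<delta>_def by (simp add: abs_divide)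
  also have "\<dots> \<le> (\<bar>t\<bar> + 1) / L"
    by (rule frac_le) (use S1' dj Lpos in auto)
  also have "\<dots> = e / 4" unfolding L_def using e by (simp add: field_simps)
  finally have \<delta>e: "\<bar>\<delta>\<bar> \<le> e / 4" .
  obtain N where N: "(1/2::real) ^ N < e / 2" using real_arch_pow_inv[of "e/2" "1/2"] e by auto
  have coord: "dist (a k) (a0 k) \<le> e / 4" for k
    unfolding a_def using \<delta>e e by (simp add: dist_real_def)
  have "Max {dist (a (from_nat n)) (a0 (from_nat n)) |n. n \<le> N} \<le> e / 4"
    by (rule Max.boundedI) (use coord in auto)
  then have "dist a a0 < e"
    using dist_fun_le_dist_first_terms[of a a0 N] N by linarith
  moreover define w where "w = (\<lambda>i. if i < m then x i else y (i - m))"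
  have wE: "\<forall>i<2*m. w i \<in> E"
  proof (intro allI impI)
    fix i assume i: "i < 2 * m"
    show "w i \<in> E"
    proof (cases "i < m")
      case True then show ?thesis unfolding w_def using xy by simp
    next
      case False then have "i - m < m" using i by simp
      then show ?thesis unfolding w_def using xy False by simp
    qed
  qed
  have "(\<Sum>i<m. a i * (w i - w (i+m))) = (\<Sum>i<m. a i * d i)"
    by (rule sum.cong) (simp_all add: w_def d_def)
  then have "(\<Sum>i<m. a i * (w i - w (i+m))) = t" using sum_eq by simp
  ultimately show ?thesis using wE by blast
qed



lemma cont_lin:
  fixes c :: "nat \<Rightarrow> real"
  shows "continuous_on UNIV (\<lambda>a::nat\<Rightarrow>real. \<bar>(\<Sum>i<m. a i * c i) - q\<bar>)"
proof -
  have "continuous_on UNIV (\<lambda>a::nat\<Rightarrow>real. a i)" for i by simp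
  then show ?thesis by (intro continuous_intros) auto
qed

lemma main:
  assumes H: "Hyp E s"
  shows "\<exists>n a. closure (lin_image n a E) = UNIV"
proof -
  have spos: "s > 0" using H unfolding Hyp_def by simp
  define m where "m = nat \<lceil>1/s\<rceil> + 1"
  have "real m > 1 / s" unfolding m_def by linarith
  then have sm: "s * real m > 1" using spos by (simp add: field_simps)
  define T where "T = (\<lambda>(q::real, k::nat). {a::nat\<Rightarrow>real. \<exists>w. (\<forall>i<2*m. w i \<in> E) \<and>
      \<bar>(\<Sum>i<m. a i * (w i - w (i+m))) - q\<bar> < 1 / (real k + 1)})"
  define G where "G = T ` (\<rat> \<times> UNIV)"
  have cG: "countable G" unfolding G_def
    by (intro countable_image countable_SIGMA countable_rat) auto
  have openT: "open (T qk)" for qk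
  proof -
    obtain q k where qk: "qk = (q, k)" by force
    have "T qk = (\<Union>w\<in>{w. \<forall>i<2*m. w i \<in> E}. {a. \<bar>(\<Sum>i<m. a i * (w i - w (i+m))) - q\<bar> < 1 / (real k + 1)})"
      unfolding T_def qk by auto
    also have "open \<dots>"
      by (intro open_UN ballI open_Collect_less cont_lin continuous_on_const)
    finally show ?thesis .
  qed
  have denseT: "closure (T qk) = UNIV" if "qk \<in> \<rat> \<times> UNIV" for qk
  proof -
    obtain q k where qk: "qk = (q, k)" by force
    have "a0 \<in> closure (T qk)" for a0
    proof (unfold closure_approachable, intro allI impI)
      fix e :: real assume "e > 0"
      from dens[OF H sm this, of a0 q] obtain a w where
        "dist a a0 < e" "\<forall>i<2*m. w i \<in> E" "(\<Sum>i<m. a i * (w i - w (i+m))) = q" by blast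
      moreover have "1 / (real k + 1) > 0" by simp
      ultimately show "\<exists>y\<in>T qk. dist y a0 < e" unfolding T_def qk by force
    qed
    then show ?thesis by blast
  qed
  have "euclidean closure_of \<Inter>G = topspace euclidean"
  proof (rule Baire_category)
    show "completely_metrizable_space (euclidean :: (nat \<Rightarrow> real) topology) \<or>
      locally_compact_space (euclidean :: (nat \<Rightarrow> real) topology) \<and> regular_space (euclidean :: (nat \<Rightarrow> real) topology)"
      using completely_metrizable_space_euclidean by blast
    show "countable G" by (rule cG)
    fix U assume "U \<in> G"
    then obtain qk where "qk \<in> \<rat> \<times> UNIV" "U = T qk" unfolding G_def by blast
    then show "openin euclidean U \<and> euclidean closure_of U = topspace euclidean"
      using openT denseT by simp
  qed
  then have "closure (\<Inter>G) = UNIV" by simp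
  then have "\<Inter>G \<noteq> {}" by auto
  then obtain a where a: "a \<in> \<Inter>G" by blast
  define b where "b = (\<lambda>i. if i < m then a i else - a (i - m))"
  have "z \<in> closure (lin_image (2*m) b E)" for z
  proof (unfold closure_approachable, intro allI impI)
    fix e :: real assume e: "e > 0"
    obtain q where q: "q \<in> \<rat>" "z - e/2 < q" "q < z + e/2"
      using Rats_dense_in_real[of "z - e/2" "z + e/2"] e by auto
    obtain k :: nat where k: "inverse (real (Suc k)) < e/2"
      using reals_Archimedean[of "e/2"] e by auto
    have "a \<in> T (q, k)" using a q unfolding G_def by blast
    then obtain w where w: "\<forall>i<2*m. w i \<in> E"
      "\<bar>(\<Sum>i<m. a i * (w i - w (i+m))) - q\<bar> < 1 / (real k + 1)"
      unfolding T_def by auto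
    have "(\<Sum>i<2*m. b i * w i) = (\<Sum>i<m+m. b i * w i)" by (simp add: mult_2)
    also have "\<dots> = (\<Sum>i<m. b i * w i) + (\<Sum>i<m. b (i+m) * w (i+m))"
      by (rule sum_split_add)
    also have "\<dots> = (\<Sum>i<m. a i * (w i - w (i+m)))"
      by (simp add: b_def sum_subtractf right_diff_distrib sum_negf)
    finally have yeq: "(\<Sum>i<2*m. b i * w i) = (\<Sum>i<m. a i * (w i - w (i+m)))" .
    have yin: "(\<Sum>i<2*m. b i * w i) \<in> lin_image (2*m) b E"
      unfolding lin_image_def using w(1) by blast
    have "1 / (real k + 1) < e/2" using k by (simp add: inverse_eq_divide add.commute)
    then have "dist (\<Sum>i<2*m. b i * w i) z < e"
      using w(2) q unfolding yeq dist_real_def by linarith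
    then show "\<exists>y\<in>lin_image (2*m) b E. dist y z < e" using yin by blast
  qed
  then show ?thesis by blast
qed


theorem theorem1p1:
  fixes E :: "real set"
  shows "(dim_CM E > 0 \<longrightarrow> (\<exists>n a. closure (lin_image n a E) = UNIV))
    \<and> ((\<exists>s>0. \<forall>\<^sub>F r in at_top. real (N_count ({-r<..<r} \<inter> E)) \<ge> r powr s)
         \<longrightarrow> (\<exists>n a. closure (lin_image n a E) = UNIV))"
proof (intro conjI impI)
  assume "dim_CM E > 0"
  then obtain s where "Hyp E s" using part1 by blast
  then show "\<exists>n a. closure (lin_image n a E) = UNIV" by (rule main)
next
  assume "\<exists>s>0. \<forall>\<^sub>F r in at_top. real (N_count ({-r<..<r} \<inter> E)) \<ge> r powr s"
  then obtain s where "s > 0" "\<forall>\<^sub>F r in at_top. real (N_count ({-r<..<r} \<inter> E)) \<ge> r powr s" by blast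
  then have "Hyp E s" by (rule part2)
  then show "\<exists>n a. closure (lin_image n a E) = UNIV" by (rule main)
qed

end
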